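(* Let $n,m\in\mathbb{N}$ with $2\le m\le n-1$, let $H(\psi),H(\chi)\in Z_{n,m}$, and let $U_m$ be the stabiliser of $1$ in $S_m$. Then: (i) $H(\psi)\cong H(\chi)$ if and only if $\psi$ and $\chi$ lie in the same orbit of the power group $S_{[n]\setminus[m]}^{\times 2}\times U_m$; (ii) $H(\psi)$ and $H(\chi)$ are isomorphic or anti-isomorphic if and only if $\psi$ and $\chi$ lie in the same orbit of the power group $2S_{[n]\setminus[m]}^{\times 2}\times U_m$; (iii) if moreover $H(\psi)$ and $H(\chi)$ are commutative, then $H(\psi)\cong H(\chi)$ if and only if $\psi'$ and $\chi'$ lie in the same orbit of the power group $S_{[n]\setminus[m]}^{\{2\}}\times U_m$.
   Context: $[n]=\{1,\ldots,n\}$. For $\psi:([n]\setminus[m])\times([n]\setminus[m])\to[m]$, $H(\psi)$ is $[n]$ with $xy=\psi(x,y)$ for $x,y\in[n]\setminus[m]$ and $xy=1$ otherwise; $Z_{n,m}$ is the set of $H(\psi)$ with $[m]\setminus\{1\}\subseteq\operatorname{im}\psi$. If $H(\psi)$ is commutative, $\psi'$ is the function on subsets of $[n]\setminus[m]$ of size $1$ or $2$ given by $\psi'\{i,j\}=\psi(i,j)$. An anti-isomorphism $S\to T$ is a bijection $f$ with $f(xy)=f(y)f(x)$. Power group: if groups $A$ and $B$ act on finite sets $X$ and $Y$, then $A\times B$ acts on functions $f:X\to Y$ by $f^{(\alpha,\beta)}(x)=(f(x^\alpha))^\beta$. Actions on $X=[n]\setminus[m]$: $S_X^{\times 2}$ is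 $S_X$ acting on $X\times X$ by $(x_1,x_2)^\alpha=(x_1^\alpha,x_2^\alpha)$; $2S_X^{\times 2}$ is $S_2\times S_X$ acting on $X\times X$ by $(x_1,x_2)^{(\pi,\alpha)}=(x_{1^\pi}^\alpha,x_{2^\pi}^\alpha)$; $S_X^{\{2\}}$ is $S_X$ acting on the set of subsets of $X$ of size $1$ or $2$ by $\{x_1,x_2\}^\alpha=\{x_1^\alpha,x_2^\alpha\}$. $U_m$ acts naturally on $[m]$. *)

theory Defs
  imports "HOL-Combinatorics.Permutations"
begin

definition Xs :: "nat \<Rightarrow> nat \<Rightarrow> nat set" where
  "Xs n m = {1..n} - {1..m}"

text \<open>Multiplication of H(psi) on [n]: xy = psi x y for x,y in [n]\[m], and 1 otherwise.
  Only the values of psi on Xs n m \<times> Xs n m matter.\<close>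
definition Hmul :: "nat \<Rightarrow> nat \<Rightarrow> (nat \<Rightarrow> nat \<Rightarrow> nat) \<Rightarrow> nat \<Rightarrow> nat \<Rightarrow> nat" where
  "Hmul n m psi x y = (if x \<in> Xs n m \<and> y \<in> Xs n m then psi x y else 1)"

definition in_Z :: "nat \<Rightarrow> nat \<Rightarrow> (nat \<Rightarrow> nat \<Rightarrow> nat) \<Rightarrow> bool" where
  "in_Z n m psi \<longleftrightarrow>
     (\<forall>x\<in>Xs n m. \<forall>y\<in>Xs n m. psi x y \<in> {1..m}) \<and>
     {1..m} - {1} \<subseteq> (\<lambda>(x, y). psi x y) ` (Xs n m \<times> Xs n m)"

definition H_iso :: "nat \<Rightarrow> nat \<Rightarrow> (nat \<Rightarrow> nat \<Rightarrow> nat) \<Rightarrow> (nat \<Rightarrow> nat \<Rightarrow> nat) \<Rightarrow> bool" where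
  "H_iso n m psi chi \<longleftrightarrow> (\<exists>f. bij_betw f {1..n} {1..n} \<and>
     (\<forall>x\<in>{1..n}. \<forall>y\<in>{1..n}. f (Hmul n m psi x y) = Hmul n m chi (f x) (f y)))"

definition H_anti_iso :: "nat \<Rightarrow> nat \<Rightarrow> (nat \<Rightarrow> nat \<Rightarrow> nat) \<Rightarrow> (nat \<Rightarrow> nat \<Rightarrow> nat) \<Rightarrow> bool" where
  "H_anti_iso n m psi chi \<longleftrightarrow> (\<exists>f. bij_betw f {1..n} {1..n} \<and>
     (\<forall>x\<in>{1..n}. \<forall>y\<in>{1..n}. f (Hmul n m psi x y) = Hmul n m chi (f y) (f x)))"

definition H_commutative :: "nat \<Rightarrow> nat \<Rightarrow> (nat \<Rightarrow> nat \<Rightarrow> nat) \<Rightarrow> bool" where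
  "H_commutative n m psi \<longleftrightarrow> (\<forall>x\<in>{1..n}. \<forall>y\<in>{1..n}. Hmul n m psi x y = Hmul n m psi y x)"

definition U :: "nat \<Rightarrow> (nat \<Rightarrow> nat) set" where
  "U m = {\<beta>. \<beta> permutes {1..m} \<and> \<beta> 1 = 1}"

text \<open>Same orbit of the power group S_X^{\<times>2} \<times> U_m on functions X \<times> X \<rightarrow> [m]:
  chi = psi^(alpha,beta), i.e. chi(x1,x2) = beta(psi(x1^alpha, x2^alpha)).\<close>
definition orbit_SX2 :: "nat \<Rightarrow> nat \<Rightarrow> (nat \<Rightarrow> nat \<Rightarrow> nat) \<Rightarrow> (nat \<Rightarrow> nat \<Rightarrow> nat) \<Rightarrow> bool" where
  "orbit_SX2 n m psi chi \<longleftrightarrow> (\<exists>\<alpha> \<beta>. \<alpha> permutes Xs n m \<and> \<beta> \<in> U m \<and>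
     (\<forall>x1\<in>Xs n m. \<forall>x2\<in>Xs n m. chi x1 x2 = \<beta> (psi (\<alpha> x1) (\<alpha> x2))))"

text \<open>Same orbit of the power group 2S_X^{\<times>2} \<times> U_m; pi in S_2 acts on coordinates:
  (x1,x2)^(pi,alpha) = (x_{1^pi}^alpha, x_{2^pi}^alpha).\<close>
definition orbit_2SX2 :: "nat \<Rightarrow> nat \<Rightarrow> (nat \<Rightarrow> nat \<Rightarrow> nat) \<Rightarrow> (nat \<Rightarrow> nat \<Rightarrow> nat) \<Rightarrow> bool" where
  "orbit_2SX2 n m psi chi \<longleftrightarrow> (\<exists>\<pi> \<alpha> \<beta>. \<pi> permutes {1::nat, 2} \<and> \<alpha> permutes Xs n m \<and> \<beta> \<in> U m \<and>
     (\<forall>x1\<in>Xs n m. \<forall>x2\<in>Xs n m.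
        (let x = (\<lambda>i::nat. if i = 1 then x1 else x2)
         in chi x1 x2 = \<beta> (psi (\<alpha> (x (\<pi> 1))) (\<alpha> (x (\<pi> 2)))))))"

definition P12 :: "nat set \<Rightarrow> nat set set" where
  "P12 X = {S. S \<subseteq> X \<and> (card S = 1 \<or> card S = 2)}"

text \<open>psi'{i,j} = psi(i,j) (well defined when H(psi) is commutative).\<close>
definition psi' :: "(nat \<Rightarrow> nat \<Rightarrow> nat) \<Rightarrow> nat set \<Rightarrow> nat" where
  "psi' psi S = psi (Min S) (Max S)"

text \<open>Same orbit of the power group S_X^{2} \<times> U_m on functions P12(X) \<rightarrow> [m]:
  chi'(S) = beta(psi'(S^alpha)), with S^alpha = alpha ` S.\<close>
definition orbit_SXset :: "nat \<Rightarrow> nat \<Rightarrow> (nat set \<Rightarrow> nat) \<Rightarrow> (nat set \<Rightarrow> nat) \<Rightarrow> bool" where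
  "orbit_SXset n m f g \<longleftrightarrow> (\<exists>\<alpha> \<beta>. \<alpha> permutes Xs n m \<and> \<beta> \<in> U m \<and>
     (\<forall>S\<in>P12 (Xs n m). g S = \<beta> (f (\<alpha> ` S))))"

end

theory Submission
  imports Defs
begin

lemma Xs_alt: "Xs n m = {Suc m..n}"
  unfolding Xs_def by auto

lemma part1:
  fixes psi chi :: "nat \<Rightarrow> nat \<Rightarrow> nat"
  assumes m1: "1 \<le> m" and mn: "m < n"
    and zp: "in_Z n m psi" and zc: "in_Z n m chi"
  shows "H_iso n m psi chi \<longleftrightarrow> orbit_SX2 n m psi chi"
proof
  let ?X = "Xs n m"
  have X: "?X = {Suc m..n}" by (rule Xs_alt)
  have psiv: "\<And>x y. x \<in> ?X \<Longrightarrow> y \<in> ?X \<Longrightarrow> psi x y \<in> {1..m}" using zp unfolding in_Z_def by blast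
  have chiv: "\<And>x y. x \<in> ?X \<Longrightarrow> y \<in> ?X \<Longrightarrow> chi x y \<in> {1..m}" using zc unfolding in_Z_def by blast
  have n1: "1 \<notin> ?X" using X m1 by auto
  have H11: "Hmul n m psi 1 1 = 1" using n1 by (simp add: Hmul_def)
  have hc: "\<And>x y. Hmul n m chi x y \<in> {1..m}" using chiv m1 unfolding Hmul_def by auto
  assume "H_iso n m psi chi"
  then obtain f where bf: "bij_betw f {1..n} {1..n}"
    and hom: "\<forall>x\<in>{1..n}. \<forall>y\<in>{1..n}. f (Hmul n m psi x y) = Hmul n m chi (f x) (f y)"
    unfolding H_iso_def by blast
  have fn: "\<And>x. x \<in> {1..n} \<Longrightarrow> f x \<in> {1..n}" using bf bij_betwE by blast
  have injf: "inj_on f {1..n}" using bf bij_betw_def by blast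
  have sub: "f ` {1..m} \<subseteq> {1..m}"
  proof
    fix w assume "w \<in> f ` {1..m}"
    then obtain z where z: "z \<in> {1..m}" "w = f z" by blast
    have "\<exists>x\<in>{1..n}. \<exists>y\<in>{1..n}. Hmul n m psi x y = z"
    proof (cases "z = 1")
      case True
      then show ?thesis using mn m1 H11 by (intro bexI[of _ 1]) auto
    next
      case False
      then have "z \<in> (\<lambda>(x, y). psi x y) ` (?X \<times> ?X)" using z zp unfolding in_Z_def by blast
      then obtain x y where "x \<in> ?X" "y \<in> ?X" "psi x y = z" by auto
      then show ?thesis using X by (intro bexI[of _ x] bexI[of _ y]) (auto simp: Hmul_def)
    qed
    then obtain x y where "x\<in>{1..n}" "y\<in>{1..n}" "Hmul n m psi x y = z" by blast
    then show "w \<in> {1..m}" using hom hc z by metis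
  qed
  have injm: "inj_on f {1..m}" using mn by (intro inj_on_subset[OF injf]) auto
  have fm: "f ` {1..m} = {1..m}"
    using sub card_image[OF injm] by (intro card_subset_eq) auto
  have fX: "f ` ?X = ?X"
  proof -
    have "f ` ({1..n} - {1..m}) = f ` {1..n} - f ` {1..m}"
      using injf mn by (intro inj_on_image_set_diff) auto
    then show ?thesis using fm bf unfolding Xs_def bij_betw_def by simp
  qed
  have f1: "f 1 = 1"
  proof -
    have "f 1 \<in> {1..m}" using fm m1 by auto
    then have "f 1 \<notin> ?X" using X by auto
    moreover have "f (Hmul n m psi 1 1) = Hmul n m chi (f 1) (f 1)" using hom mn m1 by auto
    moreover note H11
    ultimately show ?thesis by (simp add: Hmul_def)
  qed
  define \<beta> where "\<beta> x = (if x \<in> {1..m} then f x else x)" for x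
  have bm: "bij_betw f {1..m} {1..m}" using injm fm by (simp add: bij_betw_def)
  have "bij_betw \<beta> {1..m} {1..m} = bij_betw f {1..m} {1..m}" by (rule bij_betw_cong) (simp add: \<beta>_def)
  then have "bij_betw \<beta> {1..m} {1..m}" using bm by simp
  then have \<beta>p: "\<beta> permutes {1..m}" by (rule bij_imp_permutes) (auto simp: \<beta>_def)
  have \<beta>U: "\<beta> \<in> U m" using \<beta>p f1 m1 by (simp add: U_def \<beta>_def)
  have injX: "inj_on f ?X" by (intro inj_on_subset[OF injf]) (auto simp: Xs_def)
  have bX: "bij_betw f ?X ?X" using injX fX by (simp add: bij_betw_def)
  define \<alpha> where "\<alpha> x = (if x \<in> ?X then the_inv_into ?X f x else x)" for x
  have bX': "bij_betw (the_inv_into ?X f) ?X ?X" using bX bij_betw_the_inv_into by fastforce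
  have "bij_betw \<alpha> ?X ?X = bij_betw (the_inv_into ?X f) ?X ?X" by (rule bij_betw_cong) (simp add: \<alpha>_def)
  then have "bij_betw \<alpha> ?X ?X" using bX' by simp
  then have \<alpha>p: "\<alpha> permutes ?X" by (rule bij_imp_permutes) (simp add: \<alpha>_def)
  show "orbit_SX2 n m psi chi"
    unfolding orbit_SX2_def
  proof (intro exI conjI ballI)
    show "\<alpha> permutes ?X" by (rule \<alpha>p)
    show "\<beta> \<in> U m" by (rule \<beta>U)
    fix x1 x2 assume x1: "x1 \<in> ?X" and x2: "x2 \<in> ?X"
    define a where "a = \<alpha> x1"
    define b where "b = \<alpha> x2"
    have aX: "a \<in> ?X" using x1 permutes_in_image[OF \<alpha>p] a_def by simp
    have bX2: "b \<in> ?X" using x2 permutes_in_image[OF \<alpha>p] b_def by simp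
    have fa: "f a = x1" unfolding a_def \<alpha>_def using x1 fX injX by (simp add: f_the_inv_into_f)
    have fb: "f b = x2" unfolding b_def \<alpha>_def using x2 fX injX by (simp add: f_the_inv_into_f)
    have an: "a \<in> {1..n}" "b \<in> {1..n}" using aX bX2 by (auto simp: Xs_def)
    have "f (Hmul n m psi a b) = Hmul n m chi (f a) (f b)" using hom an by blast
    then have "f (psi a b) = chi x1 x2" using aX bX2 x1 x2 fa fb by (simp add: Hmul_def)
    moreover have "\<beta> (psi a b) = f (psi a b)" using psiv[OF aX bX2] by (simp add: \<beta>_def)
    ultimately show "chi x1 x2 = \<beta> (psi (\<alpha> x1) (\<alpha> x2))" using a_def b_def by simp
  qed
next
  let ?X = "Xs n m"
  have X: "?X = {Suc m..n}" by (rule Xs_alt)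
  have psiv: "\<And>x y. x \<in> ?X \<Longrightarrow> y \<in> ?X \<Longrightarrow> psi x y \<in> {1..m}" using zp unfolding in_Z_def by blast
  assume "orbit_SX2 n m psi chi"
  then obtain \<alpha> \<beta> where \<alpha>p: "\<alpha> permutes ?X" and \<beta>U: "\<beta> \<in> U m"
    and eq: "\<forall>x1\<in>?X. \<forall>x2\<in>?X. chi x1 x2 = \<beta> (psi (\<alpha> x1) (\<alpha> x2))"
    unfolding orbit_SX2_def by blast
  have \<beta>p: "\<beta> permutes {1..m}" and \<beta>1: "\<beta> 1 = 1" using \<beta>U by (auto simp: U_def)
  have ip: "inv \<alpha> permutes ?X" using \<alpha>p by (rule permutes_inv)
  define f where "f = inv \<alpha> \<circ> \<beta>"
  have un: "{1..n} = {1..m} \<union> ?X" using X mn by auto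
  have fp: "f permutes {1..n}" unfolding f_def un
    by (rule permutes_compose[OF permutes_subset[OF \<beta>p] permutes_subset[OF ip]]) auto
  have fX: "\<And>x. x \<in> ?X \<Longrightarrow> f x = inv \<alpha> x"
    using \<beta>p X by (auto simp: f_def permutes_not_in)
  have fM: "\<And>x. x \<in> {1..m} \<Longrightarrow> f x = \<beta> x"
  proof -
    fix x assume "x \<in> {1..m}"
    then have "\<beta> x \<in> {1..m}" using permutes_in_image[OF \<beta>p] by simp
    then have "\<beta> x \<notin> ?X" using X by auto
    then show "f x = \<beta> x" using ip by (simp add: f_def permutes_not_in)
  qed
  have f1: "f 1 = 1" using fM[of 1] \<beta>1 m1 by simp
  show "H_iso n m psi chi" unfolding H_iso_def
  proof (intro exI conjI ballI)
    show "bij_betw f {1..n} {1..n}" using fp by (rule permutes_imp_bij)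
    fix x y assume x: "x \<in> {1..n}" and y: "y \<in> {1..n}"
    show "f (Hmul n m psi x y) = Hmul n m chi (f x) (f y)"
    proof (cases "x \<in> ?X \<and> y \<in> ?X")
      case True
      then have xX: "x \<in> ?X" and yX: "y \<in> ?X" by auto
      have ixX: "inv \<alpha> x \<in> ?X" "inv \<alpha> y \<in> ?X" using xX yX permutes_in_image[OF ip] by simp_all
      have "chi (inv \<alpha> x) (inv \<alpha> y) = \<beta> (psi x y)"
        using eq ixX permutes_inverses(1)[OF \<alpha>p] by simp
      then show ?thesis using True ixX fX fM psiv[OF xX yX] by (simp add: Hmul_def)
    next
      case False
      have "f x \<notin> ?X \<or> f y \<notin> ?X"
      proof (cases "x \<in> ?X")
        case True
        then have "y \<in> {1..m}" using False y X by auto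
        then have "f y \<in> {1..m}" using fM permutes_in_image[OF \<beta>p] by simp
        then show ?thesis using X by auto
      next
        case False
        then have "x \<in> {1..m}" using x X by auto
        then have "f x \<in> {1..m}" using fM permutes_in_image[OF \<beta>p] by simp
        then show ?thesis using X by auto
      qed
      then show ?thesis using False f1 by (auto simp: Hmul_def)
    qed
  qed
qed


lemma HmulT: "Hmul n m (\<lambda>a b. psi b a) x y = Hmul n m psi y x"
  by (auto simp: Hmul_def)

lemma anti_iff: "H_anti_iso n m psi chi \<longleftrightarrow> H_iso n m (\<lambda>a b. psi b a) chi"
  unfolding H_anti_iso_def H_iso_def HmulT[of n m psi]
proof
  assume "\<exists>f. bij_betw f {1..n} {1..n} \<and> (\<forall>x\<in>{1..n}. \<forall>y\<in>{1..n}. f (Hmul n m psi x y) = Hmul n m chi (f y) (f x))"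
  then obtain f where "bij_betw f {1..n} {1..n}" and h: "\<forall>x\<in>{1..n}. \<forall>y\<in>{1..n}. f (Hmul n m psi x y) = Hmul n m chi (f y) (f x)" by blast
  moreover have "\<forall>x\<in>{1..n}. \<forall>y\<in>{1..n}. f (Hmul n m psi y x) = Hmul n m chi (f x) (f y)"
  proof (intro ballI)
    fix x y assume "x \<in> {1..n}" "y \<in> {1..n}"
    then show "f (Hmul n m psi y x) = Hmul n m chi (f x) (f y)" using h by simp
  qed
  ultimately show "\<exists>f. bij_betw f {1..n} {1..n} \<and> (\<forall>x\<in>{1..n}. \<forall>y\<in>{1..n}. f (Hmul n m psi y x) = Hmul n m chi (f x) (f y))" by (intro exI[of _ f] conjI)
next
  assume "\<exists>f. bij_betw f {1..n} {1..n} \<and> (\<forall>x\<in>{1..n}. \<forall>y\<in>{1..n}. f (Hmul n m psi y x) = Hmul n m chi (f x) (f y))"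
  then obtain f where "bij_betw f {1..n} {1..n}" and h: "\<forall>x\<in>{1..n}. \<forall>y\<in>{1..n}. f (Hmul n m psi y x) = Hmul n m chi (f x) (f y)" by blast
  moreover have "\<forall>x\<in>{1..n}. \<forall>y\<in>{1..n}. f (Hmul n m psi x y) = Hmul n m chi (f y) (f x)"
  proof (intro ballI)
    fix x y assume "x \<in> {1..n}" "y \<in> {1..n}"
    then show "f (Hmul n m psi x y) = Hmul n m chi (f y) (f x)" using h by simp
  qed
  ultimately show "\<exists>f. bij_betw f {1..n} {1..n} \<and> (\<forall>x\<in>{1..n}. \<forall>y\<in>{1..n}. f (Hmul n m psi x y) = Hmul n m chi (f y) (f x))" by (intro exI[of _ f] conjI)
qed

lemma in_Z_T:
  assumes "in_Z n m psi" shows "in_Z n m (\<lambda>a b. psi b a)"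
proof -
  have A: "\<forall>x\<in>Xs n m. \<forall>y\<in>Xs n m. psi x y \<in> {1..m}"
    and B: "{1..m} - {1} \<subseteq> (\<lambda>(x, y). psi x y) ` (Xs n m \<times> Xs n m)"
    using assms unfolding in_Z_def by simp_all
  have C: "(\<lambda>(x, y). psi x y) ` (Xs n m \<times> Xs n m) \<subseteq> (\<lambda>(x, y). psi y x) ` (Xs n m \<times> Xs n m)"
  proof
    fix z assume "z \<in> (\<lambda>(x, y). psi x y) ` (Xs n m \<times> Xs n m)"
    then obtain x y where "x \<in> Xs n m" "y \<in> Xs n m" "z = psi x y" by auto
    then show "z \<in> (\<lambda>(x, y). psi y x) ` (Xs n m \<times> Xs n m)"
      by (intro image_eqI[of _ _ "(y, x)"]) auto
  qed
  have D: "\<forall>x\<in>Xs n m. \<forall>y\<in>Xs n m. psi y x \<in> {1..m}"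
  proof (intro ballI)
    fix x y assume "x \<in> Xs n m" "y \<in> Xs n m"
    then show "psi y x \<in> {1..m}" using A by simp
  qed
  show ?thesis unfolding in_Z_def using D subset_trans[OF B C] by simp
qed

lemma orbit2_iff:
  "orbit_2SX2 n m psi chi \<longleftrightarrow> orbit_SX2 n m psi chi \<or> orbit_SX2 n m (\<lambda>a b. psi b a) chi"
proof
  assume "orbit_2SX2 n m psi chi"
  then obtain \<pi> \<alpha> \<beta> where pp: "\<pi> permutes {1::nat, 2}" and ap: "\<alpha> permutes Xs n m" and bU: "\<beta> \<in> U m"
    and eq: "\<forall>x1\<in>Xs n m. \<forall>x2\<in>Xs n m.
        (let x = (\<lambda>i::nat. if i = 1 then x1 else x2)
         in chi x1 x2 = \<beta> (psi (\<alpha> (x (\<pi> 1))) (\<alpha> (x (\<pi> 2)))))"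
    unfolding orbit_2SX2_def by blast
  have p1: "\<pi> 1 \<in> {1,2}" and p2: "\<pi> 2 \<in> {1,2}" using permutes_in_image[OF pp] by auto
  have pne: "\<pi> 1 \<noteq> \<pi> 2" using permutes_inj[OF pp] by (metis inj_eq numeral_One numeral_eq_iff semiring_norm(85))
  show "orbit_SX2 n m psi chi \<or> orbit_SX2 n m (\<lambda>a b. psi b a) chi"
  proof (cases "\<pi> 1 = 1")
    case True
    then have "\<pi> 2 = 2" using p2 pne by auto
    then have "\<forall>x1\<in>Xs n m. \<forall>x2\<in>Xs n m. chi x1 x2 = \<beta> (psi (\<alpha> x1) (\<alpha> x2))"
      using eq True by (simp add: Let_def)
    then show ?thesis using ap bU unfolding orbit_SX2_def by blast
  next
    case False
    then have a: "\<pi> 1 = 2" and "\<pi> 2 = 1" using p1 p2 pne by auto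
    then have "\<forall>x1\<in>Xs n m. \<forall>x2\<in>Xs n m. chi x1 x2 = \<beta> (psi (\<alpha> x2) (\<alpha> x1))"
      using eq by (simp add: Let_def)
    then show ?thesis using ap bU unfolding orbit_SX2_def by blast
  qed
next
  assume "orbit_SX2 n m psi chi \<or> orbit_SX2 n m (\<lambda>a b. psi b a) chi"
  then show "orbit_2SX2 n m psi chi"
  proof
    assume "orbit_SX2 n m psi chi"
    then obtain \<alpha> \<beta> where "\<alpha> permutes Xs n m" "\<beta> \<in> U m"
      "\<forall>x1\<in>Xs n m. \<forall>x2\<in>Xs n m. chi x1 x2 = \<beta> (psi (\<alpha> x1) (\<alpha> x2))"
      unfolding orbit_SX2_def by blast
    moreover have "id permutes {1::nat, 2}" by (rule permutes_id)
    ultimately show ?thesis unfolding orbit_2SX2_def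
      by (intro exI[of _ id] exI[of _ \<alpha>] exI[of _ \<beta>]) (simp add: Let_def)
  next
    assume "orbit_SX2 n m (\<lambda>a b. psi b a) chi"
    then obtain \<alpha> \<beta> where "\<alpha> permutes Xs n m" "\<beta> \<in> U m"
      "\<forall>x1\<in>Xs n m. \<forall>x2\<in>Xs n m. chi x1 x2 = \<beta> (psi (\<alpha> x2) (\<alpha> x1))"
      unfolding orbit_SX2_def by blast
    moreover have "transpose 1 2 permutes {1::nat, 2}" by (rule permutes_swap_id) auto
    ultimately show ?thesis unfolding orbit_2SX2_def
      by (intro exI[of _ "transpose 1 2"] exI[of _ \<alpha>] exI[of _ \<beta>]) (simp add: Let_def)
  qed
qed

lemma psi'_pair:
  assumes "\<And>x y. x \<in> A \<Longrightarrow> y \<in> A \<Longrightarrow> g x y = g y x" and "a \<in> A" "b \<in> A"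
  shows "psi' g {a, b} = g a b"
proof (cases "a \<le> b")
  case True
  then show ?thesis by (simp add: psi'_def min_def max_def)
next
  case False
  then show ?thesis using assms by (simp add: psi'_def min_def max_def)
qed

lemma P12_pair:
  assumes "S \<in> P12 A" obtains a b where "a \<in> A" "b \<in> A" "S = {a, b}"
proof -
  have sub: "S \<subseteq> A" and c: "card S = 1 \<or> card S = 2" using assms by (auto simp: P12_def)
  from c show ?thesis
  proof
    assume "card S = 1"
    then obtain a where "S = {a}" by (rule card_1_singletonE)
    then show ?thesis using that[of a a] sub by auto
  next
    assume "card S = 2"
    then obtain a b where "S = {a, b}" by (auto simp: card_2_iff)
    then show ?thesis using that[of a b] sub by auto
  qed
qed

lemma orbit3_iff:
  assumes cp: "\<And>x y. x \<in> Xs n m \<Longrightarrow> y \<in> Xs n m \<Longrightarrow> psi x y = psi y x"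
    and cc: "\<And>x y. x \<in> Xs n m \<Longrightarrow> y \<in> Xs n m \<Longrightarrow> chi x y = chi y x"
  shows "orbit_SXset n m (psi' psi) (psi' chi) \<longleftrightarrow> orbit_SX2 n m psi chi"
proof
  assume "orbit_SXset n m (psi' psi) (psi' chi)"
  then obtain \<alpha> \<beta> where ap: "\<alpha> permutes Xs n m" and bU: "\<beta> \<in> U m"
    and eq: "\<forall>S\<in>P12 (Xs n m). psi' chi S = \<beta> (psi' psi (\<alpha> ` S))"
    unfolding orbit_SXset_def by blast
  have "chi x1 x2 = \<beta> (psi (\<alpha> x1) (\<alpha> x2))" if x1: "x1 \<in> Xs n m" and x2: "x2 \<in> Xs n m" for x1 x2
  proof -
    have "{x1, x2} \<in> P12 (Xs n m)" using x1 x2 by (cases "x1 = x2") (auto simp: P12_def)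
    then have "psi' chi {x1, x2} = \<beta> (psi' psi (\<alpha> ` {x1, x2}))" using eq by blast
    moreover have "\<alpha> x1 \<in> Xs n m" "\<alpha> x2 \<in> Xs n m" using x1 x2 permutes_in_image[OF ap] by simp_all
    ultimately show ?thesis using psi'_pair[OF cc x1 x2] psi'_pair[OF cp, where a="\<alpha> x1" and b="\<alpha> x2"] by simp
  qed
  then show "orbit_SX2 n m psi chi" using ap bU unfolding orbit_SX2_def by blast
next
  assume "orbit_SX2 n m psi chi"
  then obtain \<alpha> \<beta> where ap: "\<alpha> permutes Xs n m" and bU: "\<beta> \<in> U m"
    and eq: "\<forall>x1\<in>Xs n m. \<forall>x2\<in>Xs n m. chi x1 x2 = \<beta> (psi (\<alpha> x1) (\<alpha> x2))"
    unfolding orbit_SX2_def by blast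
  have "psi' chi S = \<beta> (psi' psi (\<alpha> ` S))" if S: "S \<in> P12 (Xs n m)" for S
  proof -
    obtain a b where ab: "a \<in> Xs n m" "b \<in> Xs n m" "S = {a, b}" using P12_pair[OF S] by blast
    have "\<alpha> a \<in> Xs n m" "\<alpha> b \<in> Xs n m" using ab permutes_in_image[OF ap] by simp_all
    then show ?thesis using ab eq psi'_pair[OF cc, where a=a and b=b] psi'_pair[OF cp, where a="\<alpha> a" and b="\<alpha> b"] by simp
  qed
  then show "orbit_SXset n m (psi' psi) (psi' chi)" using ap bU unfolding orbit_SXset_def by blast
qed

lemma comm_X:
  assumes "H_commutative n m psi" "x \<in> Xs n m" "y \<in> Xs n m"
  shows "psi x y = psi y x"
proof -
  have "x \<in> {1..n}" "y \<in> {1..n}" using assms by (auto simp: Xs_def)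
  then have "Hmul n m psi x y = Hmul n m psi y x" using assms(1) unfolding H_commutative_def by blast
  then show ?thesis using assms by (simp add: Hmul_def)
qed

theorem lemma6p2:
  fixes n m :: nat and psi chi :: "nat \<Rightarrow> nat \<Rightarrow> nat"
  assumes "2 \<le> m" and "m \<le> n - 1"
    and "in_Z n m psi" and "in_Z n m chi"
  shows "(H_iso n m psi chi \<longleftrightarrow> orbit_SX2 n m psi chi)
       \<and> ((H_iso n m psi chi \<or> H_anti_iso n m psi chi) \<longleftrightarrow> orbit_2SX2 n m psi chi)
       \<and> (H_commutative n m psi \<and> H_commutative n m chi \<longrightarrow>
            (H_iso n m psi chi \<longleftrightarrow> orbit_SXset n m (psi' psi) (psi' chi)))"
proof -
  have m1: "1 \<le> m" and mn: "m < n" using assms(1,2) by auto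
  have i1: "H_iso n m psi chi \<longleftrightarrow> orbit_SX2 n m psi chi" by (rule part1[OF m1 mn assms(3,4)])
  have i2: "H_iso n m (\<lambda>a b. psi b a) chi \<longleftrightarrow> orbit_SX2 n m (\<lambda>a b. psi b a) chi"
    by (rule part1[OF m1 mn in_Z_T[OF assms(3)] assms(4)])
  show ?thesis
  proof (intro conjI impI)
    show "H_iso n m psi chi \<longleftrightarrow> orbit_SX2 n m psi chi" by (rule i1)
    show "(H_iso n m psi chi \<or> H_anti_iso n m psi chi) \<longleftrightarrow> orbit_2SX2 n m psi chi"
      using i1 i2 anti_iff orbit2_iff by blast
    assume c: "H_commutative n m psi \<and> H_commutative n m chi"
    have "orbit_SXset n m (psi' psi) (psi' chi) \<longleftrightarrow> orbit_SX2 n m psi chi"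
      by (rule orbit3_iff) (use c comm_X in blast)+
    then show "H_iso n m psi chi \<longleftrightarrow> orbit_SXset n m (psi' psi) (psi' chi)" using i1 by simp
  qed
qed

end
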